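(* Let $c^1,\ldots,c^M$ and $s^1,\ldots,s^M$ be sequences of customer and server types whose FCFS matching $A$ is perfect. Define the exchanged sequences by $\tilde{s}^m=s^n$ and $\tilde{c}^n=c^m$ for each $(m,n)\in A$, and let $\tilde{A}=\{(n,m):(m,n)\in A\}$ (pairing $\tilde{c}^n$ with $\tilde{s}^m$). Then $\tilde{A}$ is the unique complete FCFS matching of $(\tilde{c}^n)_{n=1}^M$ and $(\tilde{s}^m)_{m=1}^M$ in reversed time, i.e. with respect to the reversed order of indices $M,M-1,\ldots,1$: for every $(n,m)\in\tilde{A}$, each $k>m$ with $(\tilde{c}^n,\tilde{s}^k)\in\mathcal{E}$ satisfies $(l,k)\in\tilde{A}$ for some $l>n$, and each $l>n$ with $(\tilde{c}^l,\tilde{s}^m)\in\mathcal{E}$ satisfies $(l,k)\in\tilde{A}$ for some $k>m$.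
   Context: Let $\mathcal{C}$ and $\mathcal{S}$ be finite sets of customer and server types and $G=(\mathcal{C},\mathcal{S},\mathcal{E})$ a connected bipartite compatibility graph. The FCFS matching of finite sequences $(c^m)$, $(s^n)$ is the unique set $A$ of index pairs with $(m,n)\in A\Rightarrow(c^m,s^n)\in\mathcal{E}$, each index in at most one pair, no unmatched compatible pair left, and such that for every $(m,n)\in A$, every $l<n$ with $(c^m,s^l)\in\mathcal{E}$ is matched to some $k<m$ and every $k<m$ with $(c^k,s^n)\in\mathcal{E}$ is matched to some $l<n$. It is perfect if every customer and every server is matched. *)

theory Defs
  imports Main
begin

definition bip_connected :: "('c \<times> 's) set \<Rightarrow> bool" where
  "bip_connected E \<longleftrightarrow>
     (\<forall>u v :: 'c + 's. (u, v) \<in> ({(Inl a, Inr b) | a b. (a, b) \<in> E}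
                                \<union> {(Inr b, Inl a) | a b. (a, b) \<in> E})\<^sup>*)"

definition is_matching ::
  "('c \<times> 's) set \<Rightarrow> nat \<Rightarrow> nat \<Rightarrow> (nat \<Rightarrow> 'c) \<Rightarrow> (nat \<Rightarrow> 's) \<Rightarrow> (nat \<times> nat) set \<Rightarrow> bool" where
  "is_matching E M N c s A \<longleftrightarrow>
     A \<subseteq> {1..M} \<times> {1..N} \<and>
     (\<forall>(m, n) \<in> A. (c m, s n) \<in> E) \<and>
     (\<forall>m n n'. (m, n) \<in> A \<longrightarrow> (m, n') \<in> A \<longrightarrow> n = n') \<and>
     (\<forall>m m' n. (m, n) \<in> A \<longrightarrow> (m', n) \<in> A \<longrightarrow> m = m') \<and>
     (\<forall>m \<in> {1..M}. \<forall>n \<in> {1..N}. (c m, s n) \<in> E \<longrightarrow>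
        (\<exists>n'. (m, n') \<in> A) \<or> (\<exists>m'. (m', n) \<in> A))"

definition fcfs_matching_wrt ::
  "(nat \<Rightarrow> nat \<Rightarrow> bool) \<Rightarrow> ('c \<times> 's) set \<Rightarrow> nat \<Rightarrow> nat \<Rightarrow> (nat \<Rightarrow> 'c) \<Rightarrow> (nat \<Rightarrow> 's)
     \<Rightarrow> (nat \<times> nat) set \<Rightarrow> bool" where
  "fcfs_matching_wrt before E M N c s A \<longleftrightarrow>
     is_matching E M N c s A \<and>
     (\<forall>(m, n) \<in> A.
        (\<forall>l \<in> {1..N}. before l n \<longrightarrow> (c m, s l) \<in> E \<longrightarrow> (\<exists>k. before k m \<and> (k, l) \<in> A)) \<and>
        (\<forall>k \<in> {1..M}. before k m \<longrightarrow> (c k, s n) \<in> E \<longrightarrow> (\<exists>l. before l n \<and> (k, l) \<in> A)))"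

abbreviation fcfs_matching where
  "fcfs_matching \<equiv> fcfs_matching_wrt (<)"

abbreviation fcfs_matching_rev where
  "fcfs_matching_rev \<equiv> fcfs_matching_wrt (>)"

definition perfect_matching :: "nat \<Rightarrow> nat \<Rightarrow> (nat \<times> nat) set \<Rightarrow> bool" where
  "perfect_matching M N A \<longleftrightarrow>
     (\<forall>m \<in> {1..M}. \<exists>n. (m, n) \<in> A) \<and> (\<forall>n \<in> {1..N}. \<exists>m. (m, n) \<in> A)"

end

theory Submission
  imports Defs
begin

lemma rev_step:
  assumes B: "fcfs_matching_rev E M N c s B" and B': "fcfs_matching_rev E M N c s B'"
    and mn: "(m, n) \<in> B" "(m, n) \<notin> B'"
  shows "\<exists>m' n'. ((m', n') \<in> B - B' \<or> (m', n') \<in> B' - B) \<and>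
           (M - m') + (N - n') < (M - m) + (N - n)"
proof -
  have mB: "is_matching E M N c s B" and mB': "is_matching E M N c s B'"
    using B B' unfolding fcfs_matching_wrt_def by auto
  have fB: "\<forall>(m, n) \<in> B.
        (\<forall>l \<in> {1..N}. l > n \<longrightarrow> (c m, s l) \<in> E \<longrightarrow> (\<exists>k. k > m \<and> (k, l) \<in> B)) \<and>
        (\<forall>k \<in> {1..M}. k > m \<longrightarrow> (c k, s n) \<in> E \<longrightarrow> (\<exists>l. l > n \<and> (k, l) \<in> B))"
    using B unfolding fcfs_matching_wrt_def by auto
  have fB': "\<forall>(m, n) \<in> B'.
        (\<forall>l \<in> {1..N}. l > n \<longrightarrow> (c m, s l) \<in> E \<longrightarrow> (\<exists>k. k > m \<and> (k, l) \<in> B')) \<and>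
        (\<forall>k \<in> {1..M}. k > m \<longrightarrow> (c k, s n) \<in> E \<longrightarrow> (\<exists>l. l > n \<and> (k, l) \<in> B'))"
    using B' unfolding fcfs_matching_wrt_def by auto
  note m1 = mB[unfolded is_matching_def] and m2 = mB'[unfolded is_matching_def]
  have rng: "m \<in> {1..M}" "n \<in> {1..N}" using m1 mn by auto
  have e: "(c m, s n) \<in> E" using m1 mn by auto
  have "(\<exists>n'. (m, n') \<in> B') \<or> (\<exists>m'. (m', n) \<in> B')" using m2 rng e by blast
  then show ?thesis
  proof
    assume "\<exists>n'. (m, n') \<in> B'"
    then obtain n' where n': "(m, n') \<in> B'" by blast
    have nn: "n' \<noteq> n" using n' mn by auto
    have r': "n' \<in> {1..N}" and e': "(c m, s n') \<in> E" using m2 n' by auto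
    show ?thesis
    proof (cases "n' > n")
      case True
      then obtain k where k: "k > m" "(k, n') \<in> B" using fB mn(1) r' e' by fastforce
      have "(k, n') \<notin> B'" using m2 n' k by (metis less_irrefl)
      moreover have "k \<le> M" using m1 k by auto
      ultimately show ?thesis using k True rng r' by (intro exI[of _ k] exI[of _ n']) auto
    next
      case False
      hence "n' < n" using nn by auto
      then obtain k where k: "k > m" "(k, n) \<in> B'" using fB' n' rng e by fastforce
      have "(k, n) \<notin> B" using m1 mn k by (metis less_irrefl)
      moreover have "k \<le> M" using m2 k by auto
      ultimately show ?thesis using k rng by (intro exI[of _ k] exI[of _ n]) auto
    qed
  next
    assume "\<exists>m'. (m', n) \<in> B'"
    then obtain m' where m': "(m', n) \<in> B'" by blast
    have nn: "m' \<noteq> m" using m' mn by auto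
    have r': "m' \<in> {1..M}" and e': "(c m', s n) \<in> E" using m2 m' by auto
    show ?thesis
    proof (cases "m' > m")
      case True
      then obtain l where l: "l > n" "(m', l) \<in> B" using fB mn(1) r' e' by fastforce
      have "(m', l) \<notin> B'" using m2 m' l by (metis less_irrefl)
      moreover have "l \<le> N" using m1 l by auto
      ultimately show ?thesis using l True rng r' by (intro exI[of _ m'] exI[of _ l]) auto
    next
      case False
      hence "m' < m" using nn by auto
      then obtain l where l: "l > n" "(m, l) \<in> B'" using fB' m' rng e by fastforce
      have "(m, l) \<notin> B" using m1 mn l by (metis less_irrefl)
      moreover have "l \<le> N" using m2 l by auto
      ultimately show ?thesis using l rng by (intro exI[of _ m] exI[of _ l]) auto
    qed
  qed
qed

lemma rev_unique:
  assumes B: "fcfs_matching_rev E M N c s B" and B': "fcfs_matching_rev E M N c s B'"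
  shows "B = B'"
proof -
  have "\<forall>m n. (M - m) + (N - n) = w \<longrightarrow> (m, n) \<notin> (B - B') \<union> (B' - B)" for w
  proof (induction w rule: less_induct)
    case (less w)
    show ?case
    proof (intro allI impI)
      fix m n assume w: "(M - m) + (N - n) = w"
      show "(m, n) \<notin> (B - B') \<union> (B' - B)"
      proof
        assume "(m, n) \<in> (B - B') \<union> (B' - B)"
        then obtain m' n' where "((m', n') \<in> B - B' \<or> (m', n') \<in> B' - B)"
           "(M - m') + (N - n') < (M - m) + (N - n)"
          using rev_step[OF B B'] rev_step[OF B' B] by blast
        then show False using less w by blast
      qed
    qed
  qed
  hence "\<And>m n. (m, n) \<notin> (B - B') \<union> (B' - B)" by blast
  thus ?thesis by auto
qed

theorem lemma4p1:
  fixes E :: "('c::finite \<times> 's::finite) set"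
    and M :: nat
    and c ct :: "nat \<Rightarrow> 'c"
    and s st :: "nat \<Rightarrow> 's"
    and A :: "(nat \<times> nat) set"
  assumes conn: "bip_connected E"
    and fcfs: "fcfs_matching E M M c s A"
    and perf: "perfect_matching M M A"
    and exch: "\<forall>(m, n) \<in> A. st m = s n \<and> ct n = c m"
  shows "fcfs_matching_rev E M M ct st (A\<inverse>) \<and> perfect_matching M M (A\<inverse>) \<and>
         (\<forall>B. fcfs_matching_rev E M M ct st B \<longrightarrow> B = A\<inverse>)"
proof -
  have m1: "A \<subseteq> {1..M} \<times> {1..M}" "\<forall>(m, n) \<in> A. (c m, s n) \<in> E"
    "\<forall>m n n'. (m, n) \<in> A \<longrightarrow> (m, n') \<in> A \<longrightarrow> n = n'"
    "\<forall>m m' n. (m, n) \<in> A \<longrightarrow> (m', n) \<in> A \<longrightarrow> m = m'"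
    using fcfs unfolding fcfs_matching_wrt_def is_matching_def by auto
  have fA: "\<forall>(m, n) \<in> A.
        (\<forall>l \<in> {1..M}. l < n \<longrightarrow> (c m, s l) \<in> E \<longrightarrow> (\<exists>k. k < m \<and> (k, l) \<in> A)) \<and>
        (\<forall>k \<in> {1..M}. k < m \<longrightarrow> (c k, s n) \<in> E \<longrightarrow> (\<exists>l. l < n \<and> (k, l) \<in> A))"
    using fcfs unfolding fcfs_matching_wrt_def by auto
  have p1: "\<forall>m \<in> {1..M}. \<exists>n. (m, n) \<in> A" "\<forall>n \<in> {1..M}. \<exists>m. (m, n) \<in> A"
    using perf unfolding perfect_matching_def by auto
  have pA: "perfect_matching M M (A\<inverse>)" using p1 unfolding perfect_matching_def by auto
  have mA: "is_matching E M M ct st (A\<inverse>)"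
    unfolding is_matching_def
  proof (intro conjI)
    show "A\<inverse> \<subseteq> {1..M} \<times> {1..M}" using m1(1) by auto
    show "\<forall>(m, n)\<in>A\<inverse>. (ct m, st n) \<in> E" using m1(2) exch by fastforce
    show "\<forall>m n n'. (m, n) \<in> A\<inverse> \<longrightarrow> (m, n') \<in> A\<inverse> \<longrightarrow> n = n'" using m1(4) by auto
    show "\<forall>m m' n. (m, n) \<in> A\<inverse> \<longrightarrow> (m', n) \<in> A\<inverse> \<longrightarrow> m = m'" using m1(3) by auto
    show "\<forall>m\<in>{1..M}. \<forall>n\<in>{1..M}. (ct m, st n) \<in> E \<longrightarrow>
        (\<exists>n'. (m, n') \<in> A\<inverse>) \<or> (\<exists>m'. (m', n) \<in> A\<inverse>)" using p1 by auto
  qed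
  have X: "\<exists>k>n. (l, k) \<in> A"
    if am: "(m, n) \<in> A" and a2: "l \<in> {1..M}" and a3: "l > m" and a4: "(ct n, st l) \<in> E"
    for m n l
  proof -
    obtain n' where n': "(l, n') \<in> A" using p1 a2 by blast
    have ct: "ct n = c m" "st l = s n'" using exch am n' by auto
    have r: "n' \<in> {1..M}" using m1(1) n' by auto
    have "n' \<noteq> n" using m1(4) am n' a3 by auto
    moreover have "\<not> n' < n"
    proof
      assume "n' < n"
      then obtain k where kk: "k < m" "(k, n') \<in> A" using fA am r a4 ct by fastforce
      hence "k = l" using m1(4) n' by blast
      thus False using kk a3 by auto
    qed
    ultimately have "n' > n" by simp
    thus ?thesis using n' by blast
  qed
  have Y: "\<exists>l>m. (l, k) \<in> A"
    if am: "(m, n) \<in> A" and a2: "k \<in> {1..M}" and a3: "k > n" and a4: "(ct k, st m) \<in> E"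
    for m n k
  proof -
    obtain m' where m': "(m', k) \<in> A" using p1 a2 by blast
    have ct: "ct k = c m'" "st m = s n" using exch am m' by auto
    have r: "m' \<in> {1..M}" using m1(1) m' by auto
    have "m' \<noteq> m" using m1(3) am m' a3 by auto
    moreover have "\<not> m' < m"
    proof
      assume "m' < m"
      then obtain l where ll: "l < n" "(m', l) \<in> A" using fA am r a4 ct by fastforce
      hence "l = k" using m1(3) m' by blast
      thus False using ll a3 by auto
    qed
    ultimately have "m' > m" by simp
    thus ?thesis using m' by blast
  qed
  have fR: "\<forall>(n, m) \<in> A\<inverse>.
        (\<forall>l \<in> {1..M}. l > m \<longrightarrow> (ct n, st l) \<in> E \<longrightarrow> (\<exists>k. k > n \<and> (k, l) \<in> A\<inverse>)) \<and>
        (\<forall>k \<in> {1..M}. k > n \<longrightarrow> (ct k, st m) \<in> E \<longrightarrow> (\<exists>l. l > m \<and> (k, l) \<in> A\<inverse>))"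
    using X Y by auto
  have R: "fcfs_matching_rev E M M ct st (A\<inverse>)"
    unfolding fcfs_matching_wrt_def using mA fR by blast
  show ?thesis using R pA rev_unique[OF _ R] by blast
qed

end
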